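(* Let $n\ge4$, let $C=\mathrm{circ}(1,0,\ldots,0,1)$ of order $n-1$, and let $X=2(CC^T+I_{n-1})^{-1}\left[ (n-1)I_{n-1}-J_{n-1}\right]$ and $Y= J_{n-1}+C^TX$ (these are the blocks of the Moore–Penrose inverse $M^+=\frac{1}{2(n-1)}\left[\begin{smallmatrix}2\mathbf{1} & X\\ -\mathbf{1} & Y\end{smallmatrix}\right]$ of the incidence matrix $M=\left[\begin{smallmatrix}\mathbf{1}^T & \mathbf{0}^T\\ I_{n-1} & C\end{smallmatrix}\right]$ of the wheel graph $W_n$). Then $X$ is a symmetric circulant matrix and $Y$ is a circulant matrix.
   Context: For $c_0,\dots,c_{k-1}$, $\mathrm{circ}(c_0,\ldots,c_{k-1})$ denotes the $k\times k$ circulant matrix whose $(i,j)$-entry is $c_{(j-i)\bmod k}$. $J_{n-1}$ is the $(n-1)\times(n-1)$ all-ones matrix, $I_{n-1}$ the identity, $\mathbf 1$ the all-ones vector. The matrix $CC^T+I_{n-1}=\mathrm{circ}(3,1,0,\ldots,0,1)$ is invertible. The wheel graph $W_n$ is a cycle on $n-1$ vertices together with a hub vertex adjacent to all cycle vertices. *)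

theory Defs
  imports "Jordan_Normal_Form.Gauss_Jordan_Elimination"
begin

definition circ :: "nat \<Rightarrow> (nat \<Rightarrow> 'a) \<Rightarrow> 'a mat" where
  "circ k c = mat k k (\<lambda>(i,j). c ((j + k - i) mod k))"

definition circulant :: "'a mat \<Rightarrow> bool" where
  "circulant A \<longleftrightarrow> dim_row A = dim_col A \<and> (\<exists>c. A = circ (dim_row A) c)"

definition all_ones_mat :: "nat \<Rightarrow> 'a :: one mat" where
  "all_ones_mat k = mat k k (\<lambda>_. 1)"

definition wheelC :: "nat \<Rightarrow> real mat" where
  "wheelC k = circ k (\<lambda>t. if t = 0 \<or> t = k - 1 then 1 else 0)"

text \<open>The matrix inverse (via Gauss-Jordan); meaningful for invertible square matrices.\<close>
definition inv_mat :: "real mat \<Rightarrow> real mat" where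
  "inv_mat A = the (mat_inverse A)"

end

theory Submission imports Defs "Jordan_Normal_Form.Determinant" begin
lemma mkm: "y < (k::nat) \<Longrightarrow> (x = y \<or> x = y + k) \<Longrightarrow> x mod k = y"
  by auto
lemma modsub: "a < (k::nat) \<Longrightarrow> b < k \<Longrightarrow> (a + k - b) mod k = (if b \<le> a then a - b else a + k - b)"
  by (rule mkm) auto
lemma modadd: "a < (k::nat) \<Longrightarrow> b < k \<Longrightarrow> (a + b) mod k = (if a + b < k then a + b else a + b - k)"
  by (rule mkm) auto
lemma A1: "a < (k::nat) \<Longrightarrow> b < k \<Longrightarrow> ((a+k-b) mod k + b) mod k = a"
  by (rule mkm) (auto simp: modsub)
lemma A2: "t < (k::nat) \<Longrightarrow> b < k \<Longrightarrow> ((t+b) mod k + k - b) mod k = t"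
  by (rule mkm) (auto simp: modadd)
lemma A3: "x < (k::nat) \<Longrightarrow> j < k \<Longrightarrow> (j + k - (j+k-x) mod k) mod k = x"
  by (rule mkm) (auto simp: modsub)

lemma L1: "i < k \<Longrightarrow> j < k \<Longrightarrow> (Suc j mod k + k - Suc i mod k) mod k = (j + k - i) mod k"
  by (cases "Suc i = k"; cases "Suc j = k") (auto simp: mod_if)

lemma L2: "j < k \<Longrightarrow> Suc ((j+k-1) mod k) mod k = j"
  by (cases j) (auto simp: mod_if)

lemma L3: "l < k \<Longrightarrow> j < k \<Longrightarrow> (j = Suc l mod k) \<longleftrightarrow> (l = (j+k-1) mod k)"
  by (cases j) (auto simp: mod_if)

lemma L5: "j < k \<Longrightarrow> (Suc j mod k + k - 1) mod k = j"
  by (cases "Suc j = k") (auto simp: mod_if)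

lemma L4: "j < k \<Longrightarrow> Suc i < k \<Longrightarrow> ((j+k-1) mod k + k - i) mod k = (j + k - Suc i) mod k"
  by (cases j) (auto simp: mod_if)

definition shiftP :: "nat \<Rightarrow> real mat" where
  "shiftP k = mat k k (\<lambda>(i,j). if j = Suc i mod k then 1 else 0)"

definition sinv :: "nat \<Rightarrow> real mat \<Rightarrow> bool" where
  "sinv k M \<longleftrightarrow> M \<in> carrier_mat k k \<and>
     (\<forall>i<k. \<forall>j<k. M $$ (Suc i mod k, Suc j mod k) = M $$ (i,j))"

lemma circ_carrier[simp]: "circ k c \<in> carrier_mat k k"
  by (simp add: circ_def)

lemma circ_sinv: "sinv k (circ k c)"
  unfolding sinv_def by (simp add: circ_def L1)

lemma sinv_circ_aux:
  assumes "sinv k M"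
  shows "i < k \<Longrightarrow> j < k \<Longrightarrow> M $$ (i,j) = M $$ (0, (j + k - i) mod k)"
proof (induction i arbitrary: j)
  case 0 then show ?case by simp
next
  case (Suc i)
  have ik: "i < k" using Suc by simp
  define j' where "j' = (j+k-1) mod k"
  have j': "j' < k" using Suc by (simp add: j'_def)
  have e: "Suc j' mod k = j" unfolding j'_def by (rule L2) (use Suc in simp)
  have "M $$ (Suc i, j) = M $$ (Suc i mod k, Suc j' mod k)"
    using Suc e by simp
  also have "\<dots> = M $$ (i, j')" using assms ik j' unfolding sinv_def by blast
  also have "\<dots> = M $$ (0, (j' + k - i) mod k)" using Suc j' by simp
  also have "(j' + k - i) mod k = (j + k - Suc i) mod k" unfolding j'_def by (rule L4) (use Suc in simp_all)
  finally show ?case .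
qed

lemma sinv_circulant:
  assumes "sinv k M" shows "circulant M"
proof -
  have c: "M \<in> carrier_mat k k" using assms by (simp add: sinv_def)
  have "M = circ k (\<lambda>t. M $$ (0,t))"
  proof (rule eq_matI)
    fix i j assume "i < dim_row (circ k (\<lambda>t. M $$ (0,t)))" "j < dim_col (circ k (\<lambda>t. M $$ (0,t)))"
    then have i: "i < k" and j: "j < k" by (simp_all add: circ_def)
    show "M $$ (i,j) = circ k (\<lambda>t. M $$ (0,t)) $$ (i,j)"
      using sinv_circ_aux[OF assms i j] i j by (simp add: circ_def)
  qed (use c in \<open>simp_all add: circ_def\<close>)
  then show ?thesis using c unfolding circulant_def by auto
qed

lemma shiftP_carrier[simp]: "shiftP k \<in> carrier_mat k k"
  by (simp add: shiftP_def)

lemma sum_ind_l: "finite S \<Longrightarrow> (\<Sum>l\<in>S. (if l = a then 1 else 0) * (f l::real)) = (if a \<in> S then f a else 0)"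
  by (rule trans[OF sum.cong[OF refl] sum.delta]) auto

lemma PM_entry:
  assumes "M \<in> carrier_mat k k" "i < k" "j < k"
  shows "(shiftP k * M) $$ (i,j) = M $$ (Suc i mod k, j)"
proof -
  have "(shiftP k * M) $$ (i,j) = (\<Sum>l=0..<k. if l = Suc i mod k then M $$ (l,j) else 0)"
    using assms by (simp add: shiftP_def scalar_prod_def sum_ind_l)
  also have "\<dots> = M $$ (Suc i mod k, j)"
    using assms by (simp add: sum.delta)
  finally show ?thesis .
qed

lemma MP_entry:
  assumes "M \<in> carrier_mat k k" "i < k" "j < k"
  shows "(M * shiftP k) $$ (i,j) = M $$ (i, (j+k-1) mod k)"
proof -
  have "(M * shiftP k) $$ (i,j) = (\<Sum>l=0..<k. M $$ (i,l) * (if j = Suc l mod k then 1 else 0))"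
    using assms by (simp add: shiftP_def scalar_prod_def)
  also have "\<dots> = (\<Sum>l=0..<k. if l = (j+k-1) mod k then M $$ (i,l) else 0)"
  proof (rule sum.cong[OF refl])
    fix l assume "l \<in> {0..<k}"
    then have "(j = Suc l mod k) = (l = (j+k-1) mod k)" using L3 assms by simp
    then show "M $$ (i,l) * (if j = Suc l mod k then 1 else 0) = (if l = (j+k-1) mod k then M $$ (i,l) else 0)"
      by simp
  qed
  also have "\<dots> = M $$ (i, (j+k-1) mod k)"
    using assms by (subst sum.delta) auto
  finally show ?thesis .
qed

lemma sinv_iff_comm:
  assumes "M \<in> carrier_mat k k"
  shows "sinv k M \<longleftrightarrow> shiftP k * M = M * shiftP k"
proof
  assume s: "sinv k M"
  show "shiftP k * M = M * shiftP k"
  proof (rule eq_matI)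
    fix i j assume ij: "i < dim_row (M * shiftP k)" "j < dim_col (M * shiftP k)"
    then have i: "i < k" and j: "j < k" using assms by (auto simp: shiftP_def)
    define j' where "j' = (j+k-1) mod k"
    have j': "j' < k" using j by (simp add: j'_def)
    have e: "Suc j' mod k = j" unfolding j'_def by (rule L2) (use j in simp)
    have "(shiftP k * M) $$ (i,j) = M $$ (Suc i mod k, Suc j' mod k)"
      using PM_entry[OF assms i j] e by simp
    also have "\<dots> = M $$ (i,j')" using s i j' unfolding sinv_def by blast
    also have "\<dots> = (M * shiftP k) $$ (i,j)" using MP_entry[OF assms i j] by (simp add: j'_def)
    finally show "(shiftP k * M) $$ (i,j) = (M * shiftP k) $$ (i,j)" .
  qed (use assms in \<open>auto simp: shiftP_def\<close>)
next
  assume e: "shiftP k * M = M * shiftP k"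
  show "sinv k M" unfolding sinv_def
  proof (intro conjI allI impI assms)
    fix i j assume i: "i < k" and j: "j < k"
    have sj: "Suc j mod k < k" using j by simp
    have "M $$ (Suc i mod k, Suc j mod k) = (shiftP k * M) $$ (i, Suc j mod k)"
      using PM_entry[OF assms i sj] by simp
    also have "\<dots> = (M * shiftP k) $$ (i, Suc j mod k)" using e by simp
    also have "\<dots> = M $$ (i,j)" using MP_entry[OF assms i sj] L5[OF j] by simp
    finally show "M $$ (Suc i mod k, Suc j mod k) = M $$ (i,j)" .
  qed
qed

lemma sinv_carrier: "sinv k M \<Longrightarrow> M \<in> carrier_mat k k"
  by (simp add: sinv_def)

lemma sinv_mult:
  assumes "sinv k A" "sinv k B" shows "sinv k (A * B)"
proof -
  have A: "A \<in> carrier_mat k k" and B: "B \<in> carrier_mat k k" using assms sinv_carrier by auto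
  have cA: "shiftP k * A = A * shiftP k" and cB: "shiftP k * B = B * shiftP k"
    using assms A B sinv_iff_comm by auto
  have P: "shiftP k \<in> carrier_mat k k" by simp
  have "shiftP k * (A * B) = (shiftP k * A) * B" using assoc_mult_mat[OF P A B] by simp
  also have "\<dots> = A * (shiftP k * B)" using assoc_mult_mat[OF A P B] by (simp add: cA)
  also have "\<dots> = (A * B) * shiftP k" using assoc_mult_mat[OF A B P] by (simp add: cB)
  finally show ?thesis using A B sinv_iff_comm[of "A*B" k] by simp
qed

lemma sinv_inverse:
  assumes "sinv k A" "B \<in> carrier_mat k k" "A * B = 1\<^sub>m k" "B * A = 1\<^sub>m k"
  shows "sinv k B"
proof -
  have A: "A \<in> carrier_mat k k" using assms sinv_carrier by auto
  have hA: "\<forall>i<k. \<forall>j<k. A $$ (Suc i mod k, Suc j mod k) = A $$ (i, j)" using assms unfolding sinv_def by blast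
  have B: "B \<in> carrier_mat k k" by fact
  have P: "shiftP k \<in> carrier_mat k k" by simp
  have cA: "shiftP k * A = A * shiftP k" using assms A sinv_iff_comm by auto
  have PB: "shiftP k * B \<in> carrier_mat k k" using mult_carrier_mat[OF P B] .
  have BP: "B * shiftP k \<in> carrier_mat k k" using mult_carrier_mat[OF B P] .
  have "shiftP k * B = (B * A) * (shiftP k * B)" using assms(4) left_mult_one_mat[OF PB] by simp
  also have "\<dots> = B * (A * (shiftP k * B))" using assoc_mult_mat[OF B A PB] .
  also have "A * (shiftP k * B) = (A * shiftP k) * B" using assoc_mult_mat[OF A P B] by simp
  also have "\<dots> = shiftP k * (A * B)" using assoc_mult_mat[OF P A B] cA by simp
  also have "B * \<dots> = (B * shiftP k) * (A * B)" using assoc_mult_mat[OF B P mult_carrier_mat[OF A B]] by simp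
  also have "\<dots> = B * shiftP k" using assms(3) right_mult_one_mat[OF BP] by simp
  finally show ?thesis using B sinv_iff_comm by auto
qed

lemma smod: "i < k \<Longrightarrow> Suc i mod k < k"
  by simp

lemma L6: "i < k \<Longrightarrow> j < k \<Longrightarrow> (Suc i mod k = Suc j mod k) = (i = j)"
  by (metis L5)

lemma sinv_add:
  assumes "sinv k A" "sinv k B" shows "sinv k (A + B)"
proof -
  have A: "A \<in> carrier_mat k k" using assms sinv_carrier by auto
  have hA: "\<forall>i<k. \<forall>j<k. A $$ (Suc i mod k, Suc j mod k) = A $$ (i, j)" using assms unfolding sinv_def by blast
  have B: "B \<in> carrier_mat k k" using assms sinv_carrier by auto
  have hB: "\<forall>i<k. \<forall>j<k. B $$ (Suc i mod k, Suc j mod k) = B $$ (i, j)" using assms unfolding sinv_def by blast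
  show ?thesis unfolding sinv_def
  proof (intro conjI allI impI)
    show "A + B \<in> carrier_mat k k" using A B by auto
    fix i j assume i: "i < k" and j: "j < k"
    have k0: "0 < k" using i by simp
    show "(A + B) $$ (Suc i mod k, Suc j mod k) = (A + B) $$ (i, j)"
      using A B hA hB i j k0 by simp
  qed
qed

lemma sinv_minus:
  assumes "sinv k A" "sinv k B" shows "sinv k (A - B)"
proof -
  have A: "A \<in> carrier_mat k k" using assms sinv_carrier by auto
  have hA: "\<forall>i<k. \<forall>j<k. A $$ (Suc i mod k, Suc j mod k) = A $$ (i, j)" using assms unfolding sinv_def by blast
  have B: "B \<in> carrier_mat k k" using assms sinv_carrier by auto
  have hB: "\<forall>i<k. \<forall>j<k. B $$ (Suc i mod k, Suc j mod k) = B $$ (i, j)" using assms unfolding sinv_def by blast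
  show ?thesis unfolding sinv_def
  proof (intro conjI allI impI)
    show "A - B \<in> carrier_mat k k" using A B by auto
    fix i j assume i: "i < k" and j: "j < k"
    have k0: "0 < k" using i by simp
    show "(A - B) $$ (Suc i mod k, Suc j mod k) = (A - B) $$ (i, j)"
      using A B hA hB i j k0 by simp
  qed
qed

lemma sinv_smult:
  assumes "sinv k A" shows "sinv k (a \<cdot>\<^sub>m A)"
proof -
  have A: "A \<in> carrier_mat k k" using assms sinv_carrier by auto
  have hA: "\<forall>i<k. \<forall>j<k. A $$ (Suc i mod k, Suc j mod k) = A $$ (i, j)" using assms unfolding sinv_def by blast
  show ?thesis unfolding sinv_def
  proof (intro conjI allI impI)
    show "a \<cdot>\<^sub>m A \<in> carrier_mat k k" using A by auto
    fix i j assume i: "i < k" and j: "j < k"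
    have k0: "0 < k" using i by simp
    show "(a \<cdot>\<^sub>m A) $$ (Suc i mod k, Suc j mod k) = (a \<cdot>\<^sub>m A) $$ (i, j)"
      using A hA i j k0 by simp
  qed
qed

lemma sinv_transpose:
  assumes "sinv k A" shows "sinv k (A\<^sup>T)"
proof -
  have A: "A \<in> carrier_mat k k" using assms sinv_carrier by auto
  have hA: "\<forall>i<k. \<forall>j<k. A $$ (Suc i mod k, Suc j mod k) = A $$ (i, j)" using assms unfolding sinv_def by blast
  show ?thesis unfolding sinv_def
  proof (intro conjI allI impI)
    show "A\<^sup>T \<in> carrier_mat k k" using A by auto
    fix i j assume i: "i < k" and j: "j < k"
    have k0: "0 < k" using i by simp
    show "(A\<^sup>T) $$ (Suc i mod k, Suc j mod k) = (A\<^sup>T) $$ (i, j)"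
      using A hA i j k0 by simp
  qed
qed

lemma sinv_one: "sinv k (1\<^sub>m k)"
  unfolding sinv_def by (simp add: smod L6)

lemma sinv_J: "sinv k (all_ones_mat k)"
  unfolding sinv_def all_ones_mat_def by (simp add: smod)


lemma sinv_eq_circ: assumes s: "sinv k M" shows "M = circ k (\<lambda>t. M $$ (0,t))"
proof (rule eq_matI)
  fix i j assume "i < dim_row (circ k (\<lambda>t. M $$ (0,t)))" "j < dim_col (circ k (\<lambda>t. M $$ (0,t)))"
  then have i: "i < k" and j: "j < k" by (simp_all add: circ_def)
  show "M $$ (i,j) = circ k (\<lambda>t. M $$ (0,t)) $$ (i,j)"
    using sinv_circ_aux[OF s i j] i j by (simp add: circ_def)
qed (use s in \<open>auto simp: sinv_def circ_def\<close>)

lemma R1: "s < (k::nat) \<Longrightarrow> (\<Sum>l=0..<k. f ((l+k-s) mod k)) = (\<Sum>t=0..<k. f t)"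
  by (rule sum.reindex_bij_witness[of _ "\<lambda>t. (t+s) mod k" "\<lambda>l. (l+k-s) mod k"]) (auto simp: A1 A2)

lemma R2: "s < (k::nat) \<Longrightarrow> (\<Sum>l=0..<k. f ((s+k-l) mod k)) = (\<Sum>t=0..<k. f t)"
  by (rule sum.reindex_bij_witness[of _ "\<lambda>t. (s+k-t) mod k" "\<lambda>l. (s+k-l) mod k"]) (auto simp: A3)

lemma sinv_J_comm:
  assumes s: "sinv k M" shows "M * all_ones_mat k = all_ones_mat k * M"
proof -
  define c where "c = (\<lambda>t. M $$ (0,t))"
  have Mc: "M = circ k c" using sinv_eq_circ[OF s] by (simp add: c_def)
  show ?thesis
  proof (rule eq_matI)
    fix i j assume "i < dim_row (all_ones_mat k * M)" "j < dim_col (all_ones_mat k * M)"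
    then have i: "i < k" and j: "j < k" by (simp_all add: all_ones_mat_def Mc circ_def)
    have "(M * all_ones_mat k) $$ (i,j) = (\<Sum>l=0..<k. c ((l+k-i) mod k))"
      using i j by (simp add: Mc circ_def all_ones_mat_def scalar_prod_def)
    also have "\<dots> = (\<Sum>t=0..<k. c t)" using R1[OF i] .
    also have "\<dots> = (\<Sum>l=0..<k. c ((j+k-l) mod k))" by (rule R2[OF j, symmetric])
    also have "\<dots> = (all_ones_mat k * M) $$ (i,j)"
      using i j by (simp add: Mc circ_def all_ones_mat_def scalar_prod_def)
    finally show "(M * all_ones_mat k) $$ (i,j) = (all_ones_mat k * M) $$ (i,j)" .
  qed (simp_all add: all_ones_mat_def Mc circ_def)
qed

lemma self_sprod_nonneg: "0 \<le> (v::real vec) \<bullet> v"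
  by (simp add: scalar_prod_def sum_nonneg)

lemma self_sprod_zero: assumes "(v::real vec) \<in> carrier_vec k" "v \<bullet> v = 0" shows "v = 0\<^sub>v k"
proof (rule eq_vecI)
  have "\<forall>i\<in>{0..<dim_vec v}. v $ i * v $ i = 0"
    using assms(2) by (subst sum_nonneg_eq_0_iff[symmetric]) (auto simp: scalar_prod_def)
  then show "\<And>i. i < dim_vec (0\<^sub>v k) \<Longrightarrow> v $ i = 0\<^sub>v k $ i" using assms(1) by auto
qed (use assms in auto)

lemma posdef:
  assumes C: "C \<in> carrier_mat k k" and v: "(v::real vec) \<in> carrier_vec k"
    and z: "(C * C\<^sup>T + 1\<^sub>m k) *\<^sub>v v = 0\<^sub>v k"
  shows "v = 0\<^sub>v k"
proof -
  have CT: "C\<^sup>T \<in> carrier_mat k k" using C by simp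
  define w where "w = C\<^sup>T *\<^sub>v v"
  have w: "w \<in> carrier_vec k" using CT v by (simp add: w_def)
  have e: "(C * C\<^sup>T + 1\<^sub>m k) *\<^sub>v v = C *\<^sub>v w + v"
    using C CT v by (simp add: add_mult_distrib_mat_vec[of _ k k] assoc_mult_mat_vec[of _ k k] w_def)
  have "0 = v \<bullet> (C *\<^sub>v w + v)" using z e scalar_prod_right_zero[OF v] by simp
  also have "\<dots> = v \<bullet> (C *\<^sub>v w) + v \<bullet> v" using C v w by (simp add: scalar_prod_add_distrib[of _ k])
  also have "v \<bullet> (C *\<^sub>v w) = w \<bullet> w" using transpose_vec_mult_scalar[OF C w v] by (simp add: w_def)
  finally have "w \<bullet> w + v \<bullet> v = 0" by simp
  then have "v \<bullet> v = 0" using self_sprod_nonneg[of w] self_sprod_nonneg[of v] by linarith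
  then show ?thesis using self_sprod_zero v by blast
qed


lemma transpose_smult': "(a \<cdot>\<^sub>m (M::real mat))\<^sup>T = a \<cdot>\<^sub>m M\<^sup>T"
  by (rule eq_matI) auto

lemma J_transpose: "(all_ones_mat k :: real mat)\<^sup>T = all_ones_mat k"
  by (rule eq_matI) (auto simp: all_ones_mat_def)

theorem mainTheorem2:
  fixes n :: nat
  assumes "n \<ge> 4"
  defines "C \<equiv> wheelC (n - 1)"
  defines "X \<equiv> 2 \<cdot>\<^sub>m (inv_mat (C * C\<^sup>T + 1\<^sub>m (n - 1)) *
                 (real (n - 1) \<cdot>\<^sub>m 1\<^sub>m (n - 1) - all_ones_mat (n - 1)))"
  defines "Y \<equiv> all_ones_mat (n - 1) + C\<^sup>T * X"
  shows "X\<^sup>T = X \<and> circulant X \<and> circulant Y"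
proof -
  define k where "k = n - 1"
  have Ck: "C = wheelC k" by (simp add: C_def k_def)
  have C: "C \<in> carrier_mat k k" by (simp add: Ck wheelC_def)
  have sC: "sinv k C" by (simp add: Ck wheelC_def circ_sinv)
  have CT: "C\<^sup>T \<in> carrier_mat k k" using C by simp
  define A where "A = C * C\<^sup>T + 1\<^sub>m k"
  have A: "A \<in> carrier_mat k k" using C by (simp add: A_def)
  have sA: "sinv k A" unfolding A_def by (intro sinv_add sinv_mult sinv_transpose sinv_one sC)
  have AT: "A\<^sup>T = A" using C CT by (simp add: A_def transpose_add[of _ k k] transpose_mult[of _ k k])
  have detA: "det A \<noteq> 0"
  proof
    assume "det A = 0"
    then obtain v where v: "v \<in> carrier_vec k" "v \<noteq> 0\<^sub>v k" "A *\<^sub>v v = 0\<^sub>v k"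
      using det_0_iff_vec_prod_zero[OF A] by blast
    then show False using posdef[OF C v(1)] by (simp add: A_def)
  qed
  obtain B where mi: "mat_inverse A = Some B"
  proof (cases "mat_inverse A")
    case None
    then show ?thesis using mat_inverse(1)[OF A None, where b="()"] det_non_zero_imp_unit[OF A detA, where b="()"] by blast
  qed
  have AB: "A * B = 1\<^sub>m k" and BA: "B * A = 1\<^sub>m k" and B: "B \<in> carrier_mat k k"
    using mat_inverse(2)[OF A mi] by auto
  have invB: "inv_mat A = B" by (simp add: inv_mat_def mi)
  have sB: "sinv k B" using sinv_inverse[OF sA B AB BA] .
  have BT: "B\<^sup>T = B"
  proof -
    have BTc: "B\<^sup>T \<in> carrier_mat k k" using B by simp
    have "B\<^sup>T = B\<^sup>T * (A * B)" using AB BTc by simp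
    also have "\<dots> = (B\<^sup>T * A) * B" using assoc_mult_mat[OF BTc A B] by simp
    also have "B\<^sup>T * A = (A * B)\<^sup>T" using transpose_mult[OF A B] AT by simp
    also have "\<dots> = 1\<^sub>m k" using AB by simp
    finally show ?thesis using B by simp
  qed
  define J where "J = (all_ones_mat k :: real mat)"
  have J: "J \<in> carrier_mat k k" by (simp add: J_def all_ones_mat_def)
  have sJ: "sinv k J" by (simp add: J_def sinv_J)
  define N where "N = real k \<cdot>\<^sub>m 1\<^sub>m k - J"
  have sN: "sinv k N" unfolding N_def by (intro sinv_minus sinv_smult sinv_one sJ)
  have N: "N \<in> carrier_mat k k" using sinv_carrier[OF sN] .
  have NT: "N\<^sup>T = N" using J by (simp add: N_def transpose_minus[of _ k k] transpose_smult' J_def J_transpose)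
  have X_eq: "X = 2 \<cdot>\<^sub>m (B * N)"
    using invB by (simp add: X_def A_def N_def J_def k_def C_def)
  have BJ: "B * J = J * B" using sinv_J_comm[OF sB] by (simp add: J_def)
  have BN: "B * N = N * B"
  proof -
    have I: "1\<^sub>m k \<in> carrier_mat k k" by simp
    have S: "real k \<cdot>\<^sub>m 1\<^sub>m k \<in> carrier_mat k k" by simp
    have "B * N = real k \<cdot>\<^sub>m B - B * J"
      using mult_minus_distrib_mat[OF B S J] mult_smult_distrib[OF B I] right_mult_one_mat[OF B]
      by (simp add: N_def)
    also have "\<dots> = real k \<cdot>\<^sub>m B - J * B" using BJ by simp
    also have "\<dots> = N * B"
      using minus_mult_distrib_mat[OF S J B] mult_smult_assoc_mat[OF I B] left_mult_one_mat[OF B]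
      by (simp add: N_def)
    finally show ?thesis .
  qed
  have XT: "X\<^sup>T = X"
    using B N by (simp add: X_eq transpose_smult' transpose_mult[of _ k k] BT NT BN)
  have sX: "sinv k X" unfolding X_eq by (intro sinv_smult sinv_mult sB sN)
  have sY: "sinv k Y" unfolding Y_def k_def[symmetric]
    by (intro sinv_add sinv_mult sinv_transpose sinv_J sC sX)
  show ?thesis using XT sinv_circulant[OF sX] sinv_circulant[OF sY] by simp
qed

end
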